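(* Let $\{T^k\}_k$ be a nested sequence of trees satisfying the standing assumptions. The big bang condition holds if and only if there exists a nested sequence of trees $\tilde T^k$, with $\tilde T^k$ a restriction of $T^k$ for each $k$, such that $|\partial\tilde T^k|\to\infty$ and $\{\tilde T^k\}_k$ has vanishing spread.
   Context: Trees $T=(V,E,\rho,\ell)$ are finite rooted trees with positive edge lengths, viewed as metric objects; $\partial T$ is the leaf set and $\ell_\gamma$ the distance from the root to point $\gamma$. Restriction of $T$ to $L\subseteq\partial T$: the tree rooted at $\rho$ consisting of all points on paths from $\rho$ to leaves in $L$. Standing assumptions: $\{T^k\}_{k\ge1}$ nested with common root ($T^{k-1}$ is a restriction of $T^k$), $|\partial T^k|=k$, and uniformly bounded height $\sup_k\max_{x\in\partial T^k}\ell_x<\infty$. A sequence $\{\tilde T^k\}$ is nested if $\tilde T^{k-1}$ is a restriction of $\tilde T^k$. Truncation: $T(s)=\{\gamma:\ell_\gamma\le s\}$ with leaf set $\partial T(s)$. Big bang condition: for every $s>0$, $|\partial T^k(s)|\to\infty$ as $k\to\infty$. Spread: for leaves $x,y$, $\ell_{xy}$ is the length of the common part of the paths from $\rho$ to $x$ and to $y$; $\mathrm{Spr}(T)=\frac{\sum_{x\ne y}(\ell_{xy}\wedge1)}{|\partial T|(|\partial T|-1)}$, the sum over ordered pairs of distinct leaves. $\{T^k\}$ has vanishing spread if $\limsup_k\mathrm{Spr}(T^k)=0$. *)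

theory Defs
  imports "HOL-Analysis.Analysis" "HOL-Library.Liminf_Limsup"
begin

text \<open>A finite rooted metric tree is encoded (up to root-preserving isometry) by its
leaf set L, the root-to-leaf distances h x = l_x, and the lengths b x y = l_xy of the
common part of the root paths to x and y. The tree itself is the union of the
root-to-leaf geodesics; its points are pairs (x,r), 0 <= r <= l_x, where (x,r) and (y,r)
are identified iff r <= l_xy.\<close>

type_synonym 'a mtree = "'a set \<times> ('a \<Rightarrow> real) \<times> ('a \<Rightarrow> 'a \<Rightarrow> real)"

definition leaves :: "'a mtree \<Rightarrow> 'a set" where
  "leaves T = fst T"

definition hgt :: "'a mtree \<Rightarrow> 'a \<Rightarrow> real" where
  "hgt T = fst (snd T)"

definition brl :: "'a mtree \<Rightarrow> 'a \<Rightarrow> 'a \<Rightarrow> real" where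
  "brl T = snd (snd T)"

text \<open>Validity: the data come from a finite rooted tree with positive edge lengths whose
leaf set is L (a leaf is not an interior point of the path to another leaf).\<close>
definition is_tree :: "'a mtree \<Rightarrow> bool" where
  "is_tree T \<longleftrightarrow> finite (leaves T) \<and>
     (\<forall>x\<in>leaves T. hgt T x > 0 \<and> brl T x x = hgt T x) \<and>
     (\<forall>x\<in>leaves T. \<forall>y\<in>leaves T. brl T x y = brl T y x \<and> 0 \<le> brl T x y \<and> brl T x y \<le> hgt T x) \<and>
     (\<forall>x\<in>leaves T. \<forall>y\<in>leaves T. x \<noteq> y \<longrightarrow> brl T x y < hgt T x) \<and>
     (\<forall>x\<in>leaves T. \<forall>y\<in>leaves T. \<forall>z\<in>leaves T. min (brl T x z) (brl T z y) \<le> brl T x y)"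

definition is_restriction :: "'a mtree \<Rightarrow> 'a mtree \<Rightarrow> bool" where
  "is_restriction S T \<longleftrightarrow> leaves S \<subseteq> leaves T \<and>
     (\<forall>x\<in>leaves S. hgt S x = hgt T x) \<and>
     (\<forall>x\<in>leaves S. \<forall>y\<in>leaves S. brl S x y = brl T x y)"

definition tpts :: "'a mtree \<Rightarrow> ('a \<times> real) set" where
  "tpts T = {(x, r). x \<in> leaves T \<and> 0 \<le> r \<and> r \<le> hgt T x}"

definition same_pt :: "'a mtree \<Rightarrow> 'a \<times> real \<Rightarrow> 'a \<times> real \<Rightarrow> bool" where
  "same_pt T p q \<longleftrightarrow> snd p = snd q \<and> snd p \<le> brl T (fst p) (fst q)"

definition below :: "'a mtree \<Rightarrow> 'a \<times> real \<Rightarrow> 'a \<times> real \<Rightarrow> bool" where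
  "below T p q \<longleftrightarrow> snd p \<le> snd q \<and> snd p \<le> brl T (fst p) (fst q)"

definition point_of :: "'a mtree \<Rightarrow> 'a \<times> real \<Rightarrow> ('a \<times> real) set" where
  "point_of T p = {q \<in> tpts T. same_pt T p q}"

text \<open>Leaf set of the truncation T(s) = {points at distance <= s from the root}:
its maximal points with respect to the ancestor order.\<close>
definition trunc_leaves :: "'a mtree \<Rightarrow> real \<Rightarrow> ('a \<times> real) set set" where
  "trunc_leaves T s = point_of T `
     {p \<in> tpts T. snd p \<le> s \<and> (\<forall>q\<in>tpts T. snd q \<le> s \<longrightarrow> below T p q \<longrightarrow> same_pt T p q)}"

definition spread :: "'a mtree \<Rightarrow> real" where
  "spread T = (\<Sum>x\<in>leaves T. \<Sum>y\<in>leaves T - {x}. min (brl T x y) 1) /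
              (real (card (leaves T)) * (real (card (leaves T)) - 1))"

text \<open>Standing assumptions on a sequence T 1, T 2, ... (index 0 is ignored).\<close>
definition standing :: "(nat \<Rightarrow> 'a mtree) \<Rightarrow> bool" where
  "standing T \<longleftrightarrow> (\<forall>k\<ge>1. is_tree (T k) \<and> card (leaves (T k)) = k) \<and>
     (\<forall>k\<ge>2. is_restriction (T (k - 1)) (T k)) \<and>
     (\<exists>C. \<forall>k\<ge>1. \<forall>x\<in>leaves (T k). hgt (T k) x \<le> C)"

definition big_bang :: "(nat \<Rightarrow> 'a mtree) \<Rightarrow> bool" where
  "big_bang T \<longleftrightarrow> (\<forall>s>0. filterlim (\<lambda>k. card (trunc_leaves (T k) s)) at_top sequentially)"

definition vanishing_spread :: "(nat \<Rightarrow> 'a mtree) \<Rightarrow> bool" where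
  "vanishing_spread T \<longleftrightarrow> limsup (\<lambda>k. ereal (spread (T k))) = 0"

end

theory Submission imports Defs begin


definition rt :: "'a mtree \<Rightarrow> 'a set \<Rightarrow> 'a mtree" where
  "rt T L = (L, hgt T, brl T)"

lemma rt_simps[simp]: "leaves (rt T L) = L" "hgt (rt T L) = hgt T" "brl (rt T L) = brl T"
  by (simp_all add: rt_def leaves_def hgt_def brl_def)

lemma tf:
  assumes "is_tree T"
  shows tf_fin: "finite (leaves T)"
    and tf_pos: "x \<in> leaves T \<Longrightarrow> hgt T x > 0"
    and tf_diag: "x \<in> leaves T \<Longrightarrow> brl T x x = hgt T x"
    and tf_sym: "x \<in> leaves T \<Longrightarrow> y \<in> leaves T \<Longrightarrow> brl T x y = brl T y x"
    and tf_nn: "x \<in> leaves T \<Longrightarrow> y \<in> leaves T \<Longrightarrow> 0 \<le> brl T x y"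
    and tf_le: "x \<in> leaves T \<Longrightarrow> y \<in> leaves T \<Longrightarrow> brl T x y \<le> hgt T x"
    and tf_lt: "x \<in> leaves T \<Longrightarrow> y \<in> leaves T \<Longrightarrow> x \<noteq> y \<Longrightarrow> brl T x y < hgt T x"
    and tf_ultra: "x \<in> leaves T \<Longrightarrow> y \<in> leaves T \<Longrightarrow> z \<in> leaves T \<Longrightarrow> min (brl T x z) (brl T z y) \<le> brl T x y"
  using assms unfolding is_tree_def by auto

lemma is_tree_rt: assumes t: "is_tree T" and L: "L \<subseteq> leaves T" shows "is_tree (rt T L)"
  unfolding is_tree_def rt_simps
proof (intro conjI ballI impI)
  show "finite L" using tf_fin[OF t] L by (rule finite_subset[rotated])
  fix x assume x: "x \<in> L"
  have x': "x \<in> leaves T" using x L by blast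
  show "0 < hgt T x" using tf_pos[OF t x'] .
  show "brl T x x = hgt T x" using tf_diag[OF t x'] .
  {
    fix y assume y: "y \<in> L"
    have y': "y \<in> leaves T" using y L by blast
    show "brl T x y = brl T y x" using tf_sym[OF t x' y'] .
    show "0 \<le> brl T x y" using tf_nn[OF t x' y'] .
    show "brl T x y \<le> hgt T x" using tf_le[OF t x' y'] .
    { assume "x \<noteq> y" thus "brl T x y < hgt T x" using tf_lt[OF t x' y'] by blast }
    fix z assume z: "z \<in> L"
    have z': "z \<in> leaves T" using z L by blast
    show "min (brl T x z) (brl T z y) \<le> brl T x y" using tf_ultra[OF t x' y' z'] .
  }
qed

definition cls :: "'a mtree \<Rightarrow> real \<Rightarrow> 'a \<Rightarrow> ('a \<times> real) set" where
  "cls T s x = point_of T (x, min s (hgt T x))"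

lemma cls_eq_iff:
  assumes t: "is_tree T" and s: "s > 0" and x: "x \<in> leaves T" and y: "y \<in> leaves T"
  shows "cls T s x = cls T s y \<longleftrightarrow> x = y \<or> s \<le> brl T x y"
proof
  assume e: "cls T s x = cls T s y"
  have "(y, min s (hgt T y)) \<in> cls T s y"
    using tf_pos[OF t y] tf_diag[OF t y] y s unfolding cls_def point_of_def tpts_def same_pt_def by auto
  hence "(y, min s (hgt T y)) \<in> cls T s x" using e by simp
  hence h: "min s (hgt T x) = min s (hgt T y)" "min s (hgt T x) \<le> brl T x y"
    unfolding cls_def point_of_def same_pt_def by auto
  show "x = y \<or> s \<le> brl T x y"
  proof (cases "s \<le> hgt T x")
    case True thus ?thesis using h by auto
  next
    case False
    hence "hgt T x \<le> brl T x y" using h by auto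
    moreover have "x \<noteq> y \<Longrightarrow> brl T x y < hgt T x" using tf_lt[OF t x y] by auto
    ultimately show ?thesis by force
  qed
next
  assume "x = y \<or> s \<le> brl T x y"
  thus "cls T s x = cls T s y"
  proof
    assume sb: "s \<le> brl T x y"
    have hx: "s \<le> hgt T x" "s \<le> hgt T y" "brl T x y = brl T y x"
      using tf_le[OF t x y] tf_le[OF t y x] tf_sym[OF t x y] sb by auto
    have eq: "s \<le> brl T x z \<longleftrightarrow> s \<le> brl T y z" if z: "z \<in> leaves T" for z
    proof -
      have "min (brl T y x) (brl T x z) \<le> brl T y z" "min (brl T x y) (brl T y z) \<le> brl T x z"
        using tf_ultra[OF t y z x] tf_ultra[OF t x z y] by auto
      thus "s \<le> brl T x z \<longleftrightarrow> s \<le> brl T y z" using hx sb by linarith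
    qed
    have mm: "min s (hgt T x) = s" "min s (hgt T y) = s" using hx by auto
    show ?thesis unfolding cls_def point_of_def same_pt_def tpts_def mm
      using eq by auto
  qed simp
qed

lemma trunc_leaves_eq:
  assumes t: "is_tree T" and s: "s > 0"
  shows "trunc_leaves T s = cls T s ` leaves T"
proof
  show "trunc_leaves T s \<subseteq> cls T s ` leaves T"
  proof
    fix P assume "P \<in> trunc_leaves T s"
    then obtain x r where p: "(x, r) \<in> tpts T" "r \<le> s"
      and mx: "\<forall>q\<in>tpts T. snd q \<le> s \<longrightarrow> below T (x, r) q \<longrightarrow> same_pt T (x, r) q"
      and P: "P = point_of T (x, r)"
      unfolding trunc_leaves_def by auto
    have x: "x \<in> leaves T" "0 \<le> r" "r \<le> hgt T x" using p unfolding tpts_def by auto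
    have hx: "hgt T x > 0" "brl T x x = hgt T x" using tf_pos[OF t x(1)] tf_diag[OF t x(1)] by auto
    have "(x, min s (hgt T x)) \<in> tpts T" using x s hx unfolding tpts_def by auto
    moreover have "below T (x, r) (x, min s (hgt T x))" using x hx p unfolding below_def by auto
    ultimately have "same_pt T (x, r) (x, min s (hgt T x))" using mx by auto
    hence "r = min s (hgt T x)" unfolding same_pt_def by simp
    thus "P \<in> cls T s ` leaves T" using P x unfolding cls_def by auto
  qed
next
  show "cls T s ` leaves T \<subseteq> trunc_leaves T s"
  proof
    fix P assume "P \<in> cls T s ` leaves T"
    then obtain x where x: "x \<in> leaves T" and P: "P = point_of T (x, min s (hgt T x))"
      unfolding cls_def by auto
    have hx: "hgt T x > 0" "brl T x x = hgt T x" using tf_pos[OF t x] tf_diag[OF t x] by auto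
    have "(x, min s (hgt T x)) \<in> tpts T" using x s hx unfolding tpts_def by auto
    moreover have "\<forall>q\<in>tpts T. snd q \<le> s \<longrightarrow> below T (x, min s (hgt T x)) q \<longrightarrow> same_pt T (x, min s (hgt T x)) q"
    proof (intro ballI impI)
      fix q assume q: "q \<in> tpts T" "snd q \<le> s" and b: "below T (x, min s (hgt T x)) q"
      obtain y r where qq: "q = (y, r)" by (cases q)
      have y: "y \<in> leaves T" "r \<le> hgt T y" using q qq unfolding tpts_def by auto
      have b2: "min s (hgt T x) \<le> r" "min s (hgt T x) \<le> brl T x y" using b qq unfolding below_def by auto
      have "r = min s (hgt T x)"
      proof (cases "s \<le> hgt T x")
        case True thus ?thesis using b2 q qq by auto
      next
        case False
        have "x = y"
        proof (rule ccontr)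
          assume "x \<noteq> y" hence "brl T x y < hgt T x" using tf_lt[OF t x y(1)] by auto
          thus False using b2 False by auto
        qed
        thus ?thesis using b2 y False by auto
      qed
      thus "same_pt T (x, min s (hgt T x)) q" using b2 qq unfolding same_pt_def by auto
    qed
    ultimately show "P \<in> trunc_leaves T s" unfolding trunc_leaves_def P by auto
  qed
qed



lemma sum_upper:
  fixes f :: "'a \<Rightarrow> 'a \<Rightarrow> real"
  assumes fin: "finite L" and A: "A \<subseteq> L" and s: "s \<ge> 0"
    and h: "\<And>x y. x\<in>L \<Longrightarrow> y\<in>L \<Longrightarrow> x\<noteq>y \<Longrightarrow> x\<notin>A \<Longrightarrow> y\<notin>A \<Longrightarrow> f x y \<le> s"
    and one: "\<And>x y. f x y \<le> 1"
  shows "(\<Sum>x\<in>L. \<Sum>y\<in>L-{x}. f x y) \<le> s * card L * (real (card L) - 1) + 2 * card A * card L"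
proof -
  have finA: "finite A" using fin A finite_subset by blast
  have each: "(\<Sum>y\<in>L-{x}. f x y) \<le> s * (real (card L) - 1) + card A + (if x \<in> A then real (card L) else 0)"
    if x: "x \<in> L" for x
  proof (cases "x \<in> A")
    case True
    have "(\<Sum>y\<in>L-{x}. f x y) \<le> (\<Sum>y\<in>L-{x}. 1)" by (rule sum_mono) (rule one)
    also have "\<dots> \<le> card L" using card_mono[OF fin, of "L-{x}"] by auto
    finally have a: "(\<Sum>y\<in>L-{x}. f x y) \<le> card L" .
    have "card L \<ge> 1" using x fin by (metis One_nat_def Suc_leI card_gt_0_iff empty_iff)
    hence "s * (real (card L) - 1) \<ge> 0" using s by simp
    thus ?thesis using a True by simp
  next
    case False
    have "(\<Sum>y\<in>L-{x}. f x y) \<le> (\<Sum>y\<in>L-{x}. s + (if y \<in> A then 1 else 0))"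
    proof (rule sum_mono)
      fix y assume y: "y \<in> L - {x}"
      show "f x y \<le> s + (if y \<in> A then 1 else 0)"
        using h[of x y] y x False one[of x y] s by auto
    qed
    also have "\<dots> = s * card (L - {x}) + card ((L-{x}) \<inter> A)"
      using fin by (simp add: sum.distrib sum.If_cases)
    also have "\<dots> \<le> s * (real (card L) - 1) + card A"
    proof -
      have "card ((L-{x}) \<inter> A) \<le> card A" using finA by (intro card_mono) auto
      moreover have "card (L - {x}) = card L - 1" using x by simp
      moreover have "card L \<ge> 1" using x fin by (metis One_nat_def Suc_leI card_gt_0_iff empty_iff)
      ultimately show ?thesis by (simp add: of_nat_diff)
    qed
    finally show ?thesis using False by simp
  qed
  have "(\<Sum>x\<in>L. \<Sum>y\<in>L-{x}. f x y) \<le> (\<Sum>x\<in>L. s * (real (card L) - 1) + card A + (if x \<in> A then real (card L) else 0))"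
    by (rule sum_mono) (rule each)
  also have "\<dots> = card L * (s * (real (card L) - 1) + card A) + card A * card L"
    using fin A by (simp add: sum.distrib sum.If_cases Int_absorb1 Int_absorb2)
  finally show ?thesis by (simp add: algebra_simps)
qed

lemma sum_lower:
  fixes f :: "'a \<Rightarrow> 'a \<Rightarrow> real" and g :: "'a \<Rightarrow> 'b"
  assumes fin: "finite L" and c: "c \<ge> 0"
    and nn: "\<And>x y. x\<in>L \<Longrightarrow> y\<in>L \<Longrightarrow> 0 \<le> f x y"
    and h: "\<And>x y. x\<in>L \<Longrightarrow> y\<in>L \<Longrightarrow> x\<noteq>y \<Longrightarrow> g x = g y \<Longrightarrow> c \<le> f x y"
  shows "c * ((real (card L))^2 / card (g ` L) - card L) \<le> (\<Sum>x\<in>L. \<Sum>y\<in>L-{x}. f x y)"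
proof -
  define F where "F x = {y\<in>L. g y = g x}" for x
  have finF: "finite (F x)" for x using fin unfolding F_def by simp
  have step1: "c * (real (card (F x)) - 1) \<le> (\<Sum>y\<in>L-{x}. f x y)" if x: "x \<in> L" for x
  proof -
    have "c * (real (card (F x)) - 1) = (\<Sum>y\<in>F x - {x}. c)"
    proof -
      have xF: "x \<in> F x" using x by (simp add: F_def)
      hence "card (F x) \<ge> 1" using finF[of x] by (metis One_nat_def Suc_leI card_gt_0_iff empty_iff)
      moreover have "card (F x - {x}) = card (F x) - 1" using xF by simp
      ultimately show ?thesis by (simp add: of_nat_diff)
    qed
    also have "\<dots> \<le> (\<Sum>y\<in>F x - {x}. f x y)"
      by (rule sum_mono) (use h x in \<open>auto simp: F_def\<close>)
    also have "\<dots> \<le> (\<Sum>y\<in>L-{x}. f x y)"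
      by (rule sum_mono2) (use fin nn x in \<open>auto simp: F_def\<close>)
    finally show ?thesis .
  qed
  have Q: "(\<Sum>x\<in>L. real (card (F x))) = (\<Sum>v\<in>g ` L. real (card {x\<in>L. g x = v}) ^ 2)"
    using fin by (subst sum.image_gen[of L _ g]) (auto simp: F_def power2_eq_square intro!: sum.cong)
  have N: "real (card L) = (\<Sum>v\<in>g ` L. real (card {x\<in>L. g x = v}))"
  proof -
    have "real (card L) = (\<Sum>x\<in>L. 1)" by simp
    also have "\<dots> = (\<Sum>v\<in>g ` L. \<Sum>x\<in>{x\<in>L. g x = v}. 1)" using fin by (rule sum.image_gen)
    finally show ?thesis by simp
  qed
  have CS: "(real (card L))^2 \<le> (\<Sum>x\<in>L. real (card (F x))) * card (g ` L)"
    unfolding N Q by (rule sum_squared_le_sum_of_squares)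
  have "(real (card L))^2 / card (g ` L) \<le> (\<Sum>x\<in>L. real (card (F x)))"
  proof (cases "card (g ` L) = 0")
    case True thus ?thesis by (simp add: sum_nonneg)
  next
    case False thus ?thesis using CS by (simp add: divide_le_eq)
  qed
  hence "c * ((real (card L))^2 / card (g ` L) - card L) \<le> c * ((\<Sum>x\<in>L. real (card (F x))) - card L)"
    using c by (intro mult_left_mono) auto
  also have "\<dots> = (\<Sum>x\<in>L. c * (real (card (F x)) - 1))"
    by (simp add: sum_distrib_left sum_subtractf algebra_simps)
  also have "\<dots> \<le> (\<Sum>x\<in>L. \<Sum>y\<in>L-{x}. f x y)" by (rule sum_mono) (rule step1)
  finally show ?thesis .
qed

lemma spread_rt: "spread (rt T L) = (\<Sum>x\<in>L. \<Sum>y\<in>L-{x}. min (brl T x y) 1) / (real (card L) * (real (card L) - 1))"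
  by (simp add: spread_def)

lemma spread_rt_cong:
  assumes "\<And>x y. x\<in>L \<Longrightarrow> y\<in>L \<Longrightarrow> brl T x y = brl T' x y"
  shows "spread (rt T L) = spread (rt T' L)"
  unfolding spread_rt using assms by (intro arg_cong2[where f="(/)"] sum.cong refl) auto

lemma spread_nonneg:
  assumes "is_tree X" shows "0 \<le> spread X"
proof -
  have "0 \<le> (\<Sum>x\<in>leaves X. \<Sum>y\<in>leaves X - {x}. min (brl X x y) 1)"
    using tf_nn[OF assms] by (intro sum_nonneg) auto
  moreover have "0 \<le> real (card (leaves X)) * (real (card (leaves X)) - 1)"
    by (cases "card (leaves X)") auto
  ultimately show ?thesis unfolding spread_def by simp
qed

lemma nested:
  assumes st: "standing T" and k: "1 \<le> k" and kk: "k \<le> k'"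
  shows "leaves (T k) \<subseteq> leaves (T k') \<and> (\<forall>x\<in>leaves (T k). hgt (T k') x = hgt (T k) x) \<and>
    (\<forall>x\<in>leaves (T k). \<forall>y\<in>leaves (T k). brl (T k') x y = brl (T k) x y)"
  using kk
proof (induction k' rule: dec_induct)
  case base thus ?case by simp
next
  case (step n)
  have all: "\<forall>k\<ge>2. is_restriction (T (k - 1)) (T k)" using st unfolding standing_def by blast
  have "2 \<le> Suc n" using step(1) k by simp
  from all[rule_format, OF this] have r: "is_restriction (T n) (T (Suc n))" by simp
  show ?case using step(3) r unfolding is_restriction_def by (auto simp: subset_iff)
qed

lemma arith1:
  fixes c S n m M :: real
  assumes c: "0 \<le> c" and m: "1 \<le> m" "m \<le> M" and n: "2*M \<le> n" and h: "c*(n^2/m - n) \<le> S"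
  shows "c/(2*M) \<le> S/(n*(n-1))"
proof -
  have "n^2/M \<le> n^2/m" using m by (intro divide_left_mono) auto
  hence h2: "c*(n^2/M - n) \<le> S" using h c by (smt (verit) mult_left_mono)
  have M0: "M > 0" using m by simp
  have n2: "n \<ge> 2" using n m by simp
  have "c*(n*(n-1)) \<le> c*(2*M*(n^2/M - n))"
  proof (rule mult_left_mono[OF _ c])
    have "2*M*(n^2/M - n) = 2*n^2 - 2*M*n" using M0 by (simp add: algebra_simps power2_eq_square)
    moreover have "n*(n-1) \<le> 2*n^2 - 2*M*n"
    proof -
      have "n * (n + 1 - 2*M) \<ge> 0" using n n2 by simp
      thus ?thesis by (simp add: algebra_simps power2_eq_square)
    qed
    ultimately show "n*(n-1) \<le> 2*M*(n^2/M - n)" by simp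
  qed
  also have "\<dots> = 2*M*(c*(n^2/M - n))" by simp
  also have "\<dots> \<le> 2*M*S" using h2 M0 by (intro mult_left_mono) auto
  finally have "c*(n*(n-1)) \<le> 2*M*S" .
  moreover have "n*(n-1) > 0" using n2 by simp
  ultimately show ?thesis using M0 by (simp add: divide_le_eq le_divide_eq algebra_simps)
qed

lemma arith2:
  fixes Sm s a n j :: real
  assumes a: "0 \<le> a" and j: "0 \<le> j" and s: "s = 1/(j+1)" and n: "(j+1)*a + j + 2 \<le> n"
    and h: "Sm \<le> s*n*(n-1) + 2*a*n"
  shows "Sm/(n*(n-1)) \<le> 3/(j+1)"
proof -
  have n2: "n \<ge> 2" using n a j by (smt (verit) mult_nonneg_nonneg)
  have pos: "n*(n-1) > 0" using n2 by simp
  have "Sm/(n*(n-1)) \<le> (s*n*(n-1) + 2*a*n)/(n*(n-1))" using h pos by (simp add: divide_right_mono)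
  also have "\<dots> = s + 2*a/(n-1)" using n2 by (simp add: field_simps)
  also have "2*a/(n-1) \<le> 2/(j+1)"
  proof -
    have "a*(j+1) \<le> n - 1" using n j by (simp add: algebra_simps)
    thus ?thesis using n2 j by (simp add: divide_simps algebra_simps)
  qed
  hence "s + 2*a/(n-1) \<le> 1/(j+1) + 2/(j+1)" using s by simp
  also have "\<dots> = 3/(j+1)" by (simp add: add_divide_distrib[symmetric])
  finally show ?thesis by simp
qed



lemma dir_rev:
  fixes T :: "nat \<Rightarrow> 'a mtree"
  assumes st: "standing T"
    and t1: "\<forall>k\<ge>1. is_tree (Tt k) \<and> is_restriction (Tt k) (T k)"
    and lim: "filterlim (\<lambda>k. card (leaves (Tt k))) at_top sequentially"
    and vs: "vanishing_spread Tt"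
  shows "big_bang T"
  unfolding big_bang_def
proof (intro allI impI)
  fix s :: real assume s: "s > 0"
  show "filterlim (\<lambda>k. card (trunc_leaves (T k) s)) at_top sequentially"
  proof (rule ccontr)
    assume "\<not> ?thesis"
    then obtain Z where "\<not> eventually (\<lambda>k. Z \<le> card (trunc_leaves (T k) s)) sequentially"
      unfolding filterlim_at_top by blast
    hence fr: "frequently (\<lambda>k. card (trunc_leaves (T k) s) \<le> max Z 1) sequentially"
      unfolding not_eventually by (rule frequently_elim1) auto
    define M where "M = max Z 1"
    have M1: "M \<ge> 1" unfolding M_def by simp
    define c where "c = min s 1"
    have c0: "c > 0" using s unfolding c_def by simp
    have "limsup (\<lambda>k. ereal (spread (Tt k))) < ereal (c / (2 * M))"
      using vs c0 M1 unfolding vanishing_spread_def by simp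
    hence ev1: "eventually (\<lambda>k. spread (Tt k) < c / (2 * M)) sequentially"
      by (rule Limsup_lessD[THEN eventually_mono]) simp
    have ev2: "eventually (\<lambda>k. 2 * M \<le> card (leaves (Tt k))) sequentially"
      using lim unfolding filterlim_at_top by blast
    have ev3: "eventually (\<lambda>k. 1 \<le> k) sequentially" by (rule eventually_ge_at_top)
    have ev: "eventually (\<lambda>k. spread (Tt k) < c / (2 * M) \<and> 2 * M \<le> card (leaves (Tt k)) \<and> 1 \<le> k) sequentially"
      using ev1 ev2 ev3 by eventually_elim auto
    have "\<exists>k. card (trunc_leaves (T k) s) \<le> M \<and> spread (Tt k) < c / (2 * M) \<and> 2 * M \<le> card (leaves (Tt k)) \<and> 1 \<le> k"
    proof (rule ccontr)
      assume "\<not> ?thesis"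
      hence "eventually (\<lambda>k. \<not> card (trunc_leaves (T k) s) \<le> M) sequentially"
        using ev by (rule_tac eventually_mono[OF ev]) auto
      thus False using fr unfolding M_def frequently_def by simp
    qed
    then obtain k where k: "card (trunc_leaves (T k) s) \<le> M" "spread (Tt k) < c / (2 * M)"
      "2 * M \<le> card (leaves (Tt k))" "1 \<le> k" by blast
    have tk: "is_tree (T k)" using st k(4) unfolding standing_def by blast
    have ttk: "is_tree (Tt k)" and rk: "is_restriction (Tt k) (T k)" using t1 k(4) by auto
    define L where "L = leaves (Tt k)"
    have LT: "L \<subseteq> leaves (T k)" using rk unfolding is_restriction_def L_def by blast
    have finL: "finite L" using tf_fin[OF ttk] unfolding L_def .
    define g where "g = cls (T k) s"
    have gL: "g ` L \<subseteq> trunc_leaves (T k) s" unfolding g_def trunc_leaves_eq[OF tk s] using LT by blast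
    have fintr: "finite (trunc_leaves (T k) s)" unfolding trunc_leaves_eq[OF tk s] using tf_fin[OF tk] by simp
    have m: "card (g ` L) \<le> M" using card_mono[OF fintr gL] k(1) by simp
    have nL: "card L \<ge> 2 * M" using k(3) unfolding L_def .
    hence "L \<noteq> {}" using M1 by auto
    hence m1: "card (g ` L) \<ge> 1" using finL by (simp add: Suc_leI card_gt_0_iff)
    have low: "c * ((real (card L))^2 / card (g ` L) - card L) \<le> (\<Sum>x\<in>L. \<Sum>y\<in>L-{x}. min (brl (Tt k) x y) 1)"
    proof (rule sum_lower[OF finL])
      show "0 \<le> c" using c0 by simp
      fix x y assume x: "x \<in> L" and y: "y \<in> L"
      show "0 \<le> min (brl (Tt k) x y) 1" using tf_nn[OF ttk] x y unfolding L_def by simp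
      assume "x \<noteq> y" "g x = g y"
      hence "s \<le> brl (T k) x y" using cls_eq_iff[OF tk s] x y LT unfolding g_def by blast
      moreover have "brl (Tt k) x y = brl (T k) x y" using rk x y unfolding is_restriction_def L_def by blast
      ultimately show "c \<le> min (brl (Tt k) x y) 1" unfolding c_def by simp
    qed
    have "c / (2 * real M) \<le> (\<Sum>x\<in>L. \<Sum>y\<in>L-{x}. min (brl (Tt k) x y) 1) / (real (card L) * (real (card L) - 1))"
      by (rule arith1[OF _ _ _ _ low]) (use c0 m m1 nL in auto)
    also have "\<dots> = spread (Tt k)" unfolding spread_def L_def ..
    finally show False using k(2) by simp
  qed
qed


lemma dir_fwd:
  fixes T :: "nat \<Rightarrow> 'a mtree"
  assumes st: "standing T" and bb: "big_bang T"
  shows "\<exists>Tt :: nat \<Rightarrow> 'a mtree.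
        (\<forall>k\<ge>1. is_tree (Tt k) \<and> is_restriction (Tt k) (T k)) \<and>
        (\<forall>k\<ge>2. is_restriction (Tt (k - 1)) (Tt k)) \<and>
        filterlim (\<lambda>k. card (leaves (Tt k))) at_top sequentially \<and>
        vanishing_spread Tt"
proof -
  define S where "S k = leaves (T k)" for k
  have tree: "is_tree (T k)" "card (S k) = k" if "1 \<le> k" for k
    using st that unfolding standing_def S_def by auto
  have finS: "finite (S k)" if "1 \<le> k" for k using tf_fin[OF tree(1)[OF that]] unfolding S_def .
  define P where "P j p p' \<longleftrightarrow> fst p < fst p' \<and> snd p \<subseteq> snd p' \<and> snd p' \<subseteq> S (fst p') \<and>
      Suc j \<le> card (snd p') \<and> spread (rt (T (fst p')) (snd p')) \<le> 3 / real (Suc j)"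
    for j :: nat and p p' :: "nat \<times> 'a set"
  have ex: "\<exists>p'. P j (N, A) p'" if N: "1 \<le> N" and A: "A \<subseteq> S N" for j N A
  proof -
    define s :: real where "s = 1 / real (Suc j)"
    have s0: "s > 0" unfolding s_def by simp
    define a where "a = card A"
    have "filterlim (\<lambda>k. card (trunc_leaves (T k) s)) at_top sequentially"
      using bb s0 unfolding big_bang_def by blast
    hence "eventually (\<lambda>k. Suc j * a + j + 2 \<le> card (trunc_leaves (T k) s)) sequentially"
      unfolding filterlim_at_top by blast
    then obtain K where K: "\<And>k. k \<ge> K \<Longrightarrow> Suc j * a + j + 2 \<le> card (trunc_leaves (T k) s)"
      unfolding eventually_sequentially by blast
    define N' where "N' = max K (Suc N)"
    have N'1: "1 \<le> N'" "N < N'" unfolding N'_def by auto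
    have tN: "is_tree (T N')" using tree N'1 by blast
    have big: "Suc j * a + j + 2 \<le> card (cls (T N') s ` S N')"
      using K[of N'] trunc_leaves_eq[OF tN s0] unfolding N'_def S_def by simp
    obtain B where B: "B \<subseteq> S N'" "inj_on (cls (T N') s) B" "cls (T N') s ` S N' = cls (T N') s ` B"
    proof -
      have "\<exists>B\<subseteq>S N'. inj_on (cls (T N') s) B \<and> cls (T N') s ` S N' = cls (T N') s ` B"
        by (rule subset_image_inj[THEN iffD1]) (rule subset_refl)
      thus ?thesis using that by blast
    qed
    have cardB: "card B = card (cls (T N') s ` S N')" using B(2,3) card_image by metis
    have AN': "A \<subseteq> S N'" using A nested[OF st N, of N'] N'1 unfolding S_def by auto
    define A' where "A' = A \<union> B"
    have A'S: "A' \<subseteq> S N'" using AN' B(1) unfolding A'_def by auto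
    have finA': "finite A'" using finite_subset[OF A'S finS[OF N'1(1)]] .
    have cA': "card B \<le> card A'" using finA' unfolding A'_def by (intro card_mono) auto
    have up: "(\<Sum>x\<in>A'. \<Sum>y\<in>A'-{x}. min (brl (T N') x y) 1)
        \<le> s * card A' * (real (card A') - 1) + 2 * card A * card A'"
    proof (rule sum_upper[OF finA'])
      show "A \<subseteq> A'" unfolding A'_def by auto
      show "0 \<le> s" using s0 by simp
      fix x y
      show "min (brl (T N') x y) 1 \<le> 1" by simp
      assume xy: "x \<in> A'" "y \<in> A'" "x \<noteq> y" "x \<notin> A" "y \<notin> A"
      hence xyB: "x \<in> B" "y \<in> B" unfolding A'_def by auto
      hence "cls (T N') s x \<noteq> cls (T N') s y" using B(2) xy(3) by (meson inj_on_contraD)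
      hence "\<not> s \<le> brl (T N') x y" using cls_eq_iff[OF tN s0] xyB B(1) unfolding S_def by blast
      thus "min (brl (T N') x y) 1 \<le> s" by simp
    qed
    have nA': "Suc j * a + j + 2 \<le> card A'" using big cardB cA' by linarith
    have nA'r: "(real j + 1) * real a + real j + 2 \<le> real (card A')"
    proof -
      have "real (Suc j * a + j + 2) \<le> real (card A')" using nA' by (simp only: of_nat_le_iff)
      thus ?thesis by (simp add: algebra_simps)
    qed
    have sp: "spread (rt (T N') A') \<le> 3 / real (Suc j)"
    proof -
      have "(\<Sum>x\<in>A'. \<Sum>y\<in>A'-{x}. min (brl (T N') x y) 1) / (real (card A') * (real (card A') - 1))
          \<le> 3 / (real j + 1)"
        by (rule arith2[where a = "real a" and s = s])
          (use up nA'r in \<open>auto simp: s_def a_def\<close>)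
      thus ?thesis unfolding spread_rt by (simp add: add.commute)
    qed
    have "P j (N, A) (N', A')"
      unfolding P_def using N'1 A'S sp big cardB cA' by (auto simp: A'_def)
    thus ?thesis by blast
  qed
  define stage where "stage = rec_nat (1, S 1) (\<lambda>j p. SOME p'. P j p p')"
  have stage0: "stage 0 = (1, S 1)" unfolding stage_def by simp
  have stageS: "stage (Suc j) = (SOME p'. P j (stage j) p')" for j unfolding stage_def by simp
  have inv: "1 \<le> fst (stage j) \<and> snd (stage j) \<subseteq> S (fst (stage j))" for j
  proof (induction j)
    case 0 thus ?case by (simp add: stage0)
  next
    case (Suc j)
    obtain N A where NA: "stage j = (N, A)" by (cases "stage j")
    have "\<exists>p'. P j (stage j) p'" using ex[of N A j] Suc NA by simp
    hence "P j (stage j) (stage (Suc j))" unfolding stageS by (rule someI_ex)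
    thus ?case using Suc unfolding P_def by auto
  qed
  have Pst: "P j (stage j) (stage (Suc j))" for j
  proof -
    obtain N A where NA: "stage j = (N, A)" by (cases "stage j")
    have "\<exists>p'. P j (stage j) p'" using ex[of N A j] inv[of j] NA by simp
    thus ?thesis unfolding stageS by (rule someI_ex)
  qed
  define Nn where "Nn j = fst (stage j)" for j
  define A where "A j = snd (stage j)" for j
  have Nn0: "Nn 0 = 1" unfolding Nn_def stage0 by simp
  have Nn1: "1 \<le> Nn j" for j using inv unfolding Nn_def by blast
  have AS: "A j \<subseteq> S (Nn j)" for j using inv unfolding Nn_def A_def by blast
  have smN: "strict_mono Nn"
    by (rule strict_monoI_Suc) (use Pst in \<open>auto simp: P_def Nn_def\<close>)
  have Astep: "A n \<subseteq> A (Suc n)" for n using Pst[of n] unfolding P_def A_def by auto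
  have Amono: "A i \<subseteq> A j" if "i \<le> j" for i j
    using lift_Suc_mono_le[of A, OF Astep that] .
  have cardA: "j \<le> card (A j)" for j
  proof (cases j)
    case 0 thus ?thesis by simp
  next
    case (Suc i) thus ?thesis using Pst[of i] unfolding P_def A_def by auto
  qed
  have spA: "spread (rt (T (Nn j)) (A j)) \<le> 3 / real j" for j
  proof (cases j)
    case 0
    have "card (A 0) = 1" unfolding A_def stage0 using tree(2)[of 1] by simp
    thus ?thesis using 0 by (simp add: spread_rt Nn_def[symmetric] A_def[symmetric])
  next
    case (Suc i) thus ?thesis using Pst[of i] unfolding P_def A_def Nn_def by auto
  qed
  have Ngt: "k < Nn (Suc k)" for k
    using strict_mono_imp_increasing[OF smN, of "Suc k"] by simp
  define J where "J k = (LEAST j. k < Nn (Suc j))" for k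
  have J1: "k < Nn (Suc (J k))" for k unfolding J_def by (rule LeastI[of _ k]) (rule Ngt)
  have J2: "Nn (J k) \<le> k" if "1 \<le> k" for k
  proof (cases "J k")
    case 0 thus ?thesis using Nn0 that by simp
  next
    case (Suc i)
    hence "i < J k" by simp
    hence "\<not> k < Nn (Suc i)" unfolding J_def by (rule not_less_Least)
    thus ?thesis using Suc by simp
  qed
  have Jmono: "J k \<le> J k'" if "k \<le> k'" for k k'
    unfolding J_def[of k] by (rule Least_le) (use J1[of k'] that in simp)
  have Jbig: "j \<le> J k" if "Nn j \<le> k" for j k
  proof (rule ccontr)
    assume "\<not> j \<le> J k"
    hence "Suc (J k) \<le> j" by simp
    hence "Nn (Suc (J k)) \<le> Nn j" using smN by (simp add: strict_mono_less_eq)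
    thus False using J1[of k] that by simp
  qed
  have AJ: "A (J k) \<subseteq> S k" if "1 \<le> k" for k
    using AS[of "J k"] nested[OF st Nn1[of "J k"] J2[OF that]] unfolding S_def by blast
  define Tt where "Tt k = rt (T k) (A (J k))" for k
  show ?thesis
  proof (intro exI conjI allI impI)
    fix k :: nat assume k: "1 \<le> k"
    show "is_tree (Tt k)" unfolding Tt_def by (rule is_tree_rt[OF tree(1)[OF k]]) (use AJ[OF k] in \<open>simp add: S_def\<close>)
    show "is_restriction (Tt k) (T k)" unfolding Tt_def is_restriction_def using AJ[OF k] by (simp add: S_def)
  next
    fix k :: nat assume k: "2 \<le> k"
    have k1: "1 \<le> k - 1" "k - 1 \<le> k" using k by auto
    have sub: "A (J (k - 1)) \<subseteq> A (J k)" by (rule Amono[OF Jmono]) simp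
    note nst = nested[OF st k1]
    show "is_restriction (Tt (k - 1)) (Tt k)"
      unfolding Tt_def is_restriction_def rt_simps
    proof (intro conjI ballI)
      show "A (J (k - 1)) \<subseteq> A (J k)" using sub .
      fix x assume x: "x \<in> A (J (k - 1))"
      hence x': "x \<in> leaves (T (k - 1))" using AJ[OF k1(1)] unfolding S_def by blast
      show "hgt (T (k - 1)) x = hgt (T k) x" using nst x' by simp
      fix y assume y: "y \<in> A (J (k - 1))"
      hence y': "y \<in> leaves (T (k - 1))" using AJ[OF k1(1)] unfolding S_def by blast
      show "brl (T (k - 1)) x y = brl (T k) x y" using nst x' y' by simp
    qed
  next
    show "filterlim (\<lambda>k. card (leaves (Tt k))) at_top sequentially"
      unfolding filterlim_at_top
    proof
      fix Z
      show "eventually (\<lambda>k. Z \<le> card (leaves (Tt k))) sequentially"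
        unfolding eventually_sequentially
      proof (intro exI allI impI)
        fix k assume "Nn Z \<le> k"
        hence "Z \<le> J k" by (rule Jbig)
        thus "Z \<le> card (leaves (Tt k))" unfolding Tt_def using cardA[of "J k"] by simp
      qed
    qed
  next
    have Jlim: "filterlim J at_top sequentially"
      unfolding filterlim_at_top eventually_sequentially using Jbig by blast
    have rlim: "filterlim (\<lambda>k. real (J k)) at_infinity sequentially"
      by (rule filterlim_at_top_imp_at_infinity, rule filterlim_compose[OF filterlim_real_sequentially Jlim])
    have up0: "(\<lambda>k. 3 / real (J k)) \<longlonglongrightarrow> 0"
      by (rule tendsto_divide_0[OF tendsto_const rlim])
    have bnd: "eventually (\<lambda>k. spread (Tt k) \<le> 3 / real (J k)) sequentially"
      unfolding eventually_sequentially
    proof (intro exI allI impI)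
      fix k :: nat assume k: "1 \<le> k"
      have "spread (Tt k) = spread (rt (T (Nn (J k))) (A (J k)))"
        unfolding Tt_def
      proof (rule spread_rt_cong)
        fix x y assume "x \<in> A (J k)" "y \<in> A (J k)"
        thus "brl (T k) x y = brl (T (Nn (J k))) x y"
          using nested[OF st Nn1[of "J k"] J2[OF k]] AS[of "J k"] unfolding S_def by blast
      qed
      thus "spread (Tt k) \<le> 3 / real (J k)" using spA[of "J k"] by simp
    qed
    have lo: "eventually (\<lambda>k. 0 \<le> spread (Tt k)) sequentially"
      unfolding eventually_sequentially
    proof (intro exI allI impI)
      fix k :: nat assume k: "1 \<le> k"
      show "0 \<le> spread (Tt k)" unfolding Tt_def
        by (rule spread_nonneg, rule is_tree_rt[OF tree(1)[OF k]]) (use AJ[OF k] in \<open>simp add: S_def\<close>)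
    qed
    have "(\<lambda>k. spread (Tt k)) \<longlonglongrightarrow> 0"
      by (rule tendsto_sandwich[OF lo bnd tendsto_const up0])
    hence "(\<lambda>k. ereal (spread (Tt k))) \<longlonglongrightarrow> ereal 0" by simp
    hence "limsup (\<lambda>k. ereal (spread (Tt k))) = ereal 0"
      by (rule lim_imp_Limsup[OF trivial_limit_sequentially])
    thus "vanishing_spread Tt" unfolding vanishing_spread_def by (simp add: zero_ereal_def)
  qed
qed

theorem mainTheorem3:
  fixes T :: "nat \<Rightarrow> 'a mtree"
  assumes "standing T"
  shows "big_bang T \<longleftrightarrow>
    (\<exists>Tt :: nat \<Rightarrow> 'a mtree.
        (\<forall>k\<ge>1. is_tree (Tt k) \<and> is_restriction (Tt k) (T k)) \<and>
        (\<forall>k\<ge>2. is_restriction (Tt (k - 1)) (Tt k)) \<and>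
        filterlim (\<lambda>k. card (leaves (Tt k))) at_top sequentially \<and>
        vanishing_spread Tt)"
  using dir_fwd[OF assms] dir_rev[OF assms] by blast

end
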